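(* Let $n \geq 2$ be a power of 2. Then $\mathrm{spar}(\mathsf{ADDR}_n) = n^{\log 3}$.
   Context: $\mathsf{ADDR}_n:\{0,1\}^{\log n+n}\to\{0,1\}$ is $\mathsf{ADDR}_n(x,y)=y_{\mathsf{bin}(x)}$ for $x\in\{0,1\}^{\log n}$, $y\in\{0,1\}^n$, where $\mathsf{bin}(x)\in[n]$ is the integer whose binary representation is $x$. $\mathrm{spar}(f)$ (M\"obius sparsity) is the number of nonzero coefficients in the unique expansion $f=\sum_S\widetilde f(S)\prod_{i\in S}z_i$ with real coefficients. Logarithms are base 2. *)

theory Defs
  imports "HOL-Analysis.Analysis"
begin

text \<open>A Boolean function on N variables is modelled as a map from inputs
  x :: nat \<Rightarrow> bool (only coordinates 0..N-1 are relevant) to real numbers.\<close>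

definition inputs :: "nat \<Rightarrow> (nat \<Rightarrow> bool) set" where
  "inputs N = {x. \<forall>i\<ge>N. \<not> x i}"

definition is_mobius_expansion :: "nat \<Rightarrow> ((nat \<Rightarrow> bool) \<Rightarrow> real) \<Rightarrow> (nat set \<Rightarrow> real) \<Rightarrow> bool" where
  "is_mobius_expansion N f c \<longleftrightarrow>
     (\<forall>S. \<not> S \<subseteq> {..<N} \<longrightarrow> c S = 0) \<and>
     (\<forall>x \<in> inputs N. f x = (\<Sum>S\<in>Pow {..<N}. c S * (\<Prod>i\<in>S. (if x i then 1 else 0))))"

definition mobius_coeff :: "nat \<Rightarrow> ((nat \<Rightarrow> bool) \<Rightarrow> real) \<Rightarrow> nat set \<Rightarrow> real" where
  "mobius_coeff N f = (THE c. is_mobius_expansion N f c)"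

definition spar :: "nat \<Rightarrow> ((nat \<Rightarrow> bool) \<Rightarrow> real) \<Rightarrow> nat" where
  "spar N f = card {S. S \<subseteq> {..<N} \<and> mobius_coeff N f S \<noteq> 0}"

text \<open>bin: the integer whose binary representation is the k bits x_0 ... x_{k-1}
  (x_0 most significant), a value in {0..2^k-1}.\<close>
definition bin :: "nat \<Rightarrow> (nat \<Rightarrow> bool) \<Rightarrow> nat" where
  "bin k x = (\<Sum>j<k. (if x j then 2 ^ (k - 1 - j) else 0))"

text \<open>ADDR_n with n = 2^k on k + n variables: variables 0..k-1 are the address
  bits x, variables k..k+n-1 are y_0..y_{n-1}; output y_{bin(x)}.\<close>
definition ADDR :: "nat \<Rightarrow> (nat \<Rightarrow> bool) \<Rightarrow> real" where
  "ADDR k z = (if z (k + bin k z) then 1 else 0)"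

end

theory Submission imports Defs begin

lemma mobius_unique:
  assumes c: "is_mobius_expansion N f c" and c': "is_mobius_expansion N f c'"
  shows "c = c'"
proof
  fix S
  define d where "d T = c T - c' T" for T
  have eq: "(\<Sum>T\<in>Pow {..<N}. d T * (\<Prod>i\<in>T. (if x i then 1 else 0))) = 0"
    if "x \<in> inputs N" for x
  proof -
    have "(\<Sum>T\<in>Pow {..<N}. d T * (\<Prod>i\<in>T. (if x i then 1 else 0))) =
       (\<Sum>T\<in>Pow {..<N}. c T * (\<Prod>i\<in>T. (if x i then 1 else 0::real))) -
       (\<Sum>T\<in>Pow {..<N}. c' T * (\<Prod>i\<in>T. (if x i then 1 else 0)))"
      by (simp add: d_def left_diff_distrib sum_subtractf)
    also have "\<dots> = 0" using c c' that unfolding is_mobius_expansion_def by auto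
    finally show ?thesis .
  qed
  have main: "\<And>S. card S = m \<Longrightarrow> S \<subseteq> {..<N} \<Longrightarrow> d S = 0" for m
  proof (induction m rule: less_induct)
    case (less m S)
    have fS: "finite S" using less.prems finite_subset by blast
    have inp: "(\<lambda>i. i \<in> S) \<in> inputs N" using less.prems by (auto simp: inputs_def)
    have "0 = (\<Sum>T\<in>Pow {..<N}. d T * (\<Prod>i\<in>T. (if i \<in> S then 1 else 0)))"
      using eq[OF inp] by simp
    also have "\<dots> = (\<Sum>T\<in>Pow {..<N}. if T \<subseteq> S then d T else 0)"
    proof (rule sum.cong)
      fix T assume "T \<in> Pow {..<N}"
      hence "finite T" using finite_subset by auto
      thus "d T * (\<Prod>i\<in>T. (if i \<in> S then 1 else 0)) = (if T \<subseteq> S then d T else 0)"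
        by (auto simp: prod.neutral subset_iff)
    qed simp
    also have "\<dots> = (\<Sum>T\<in>Pow S. d T)"
      using less.prems by (intro sum.mono_neutral_cong_right) auto
    also have "\<dots> = d S + (\<Sum>T\<in>Pow S - {S}. d T)"
      using fS by (subst sum.remove[of _ S]) auto
    also have "(\<Sum>T\<in>Pow S - {S}. d T) = 0"
    proof (rule sum.neutral, rule ballI)
      fix T assume T: "T \<in> Pow S - {S}"
      hence "card T < m" using less.prems fS by (auto intro: psubset_card_mono)
      thus "d T = 0" using less.IH T less.prems by blast
    qed
    finally show ?case by simp
  qed
  show "c S = c' S"
  proof (cases "S \<subseteq> {..<N}")
    case True thus ?thesis using main[OF refl True] by (simp add: d_def)
  next
    case False thus ?thesis using c c' by (simp add: is_mobius_expansion_def)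
  qed
qed

lemma mobius_coeff_eq:
  assumes "is_mobius_expansion N f c" shows "mobius_coeff N f = c"
  unfolding mobius_coeff_def using assms mobius_unique[OF assms] by (metis the_equality)

lemma bin_Suc: "bin (Suc k) x = 2 * bin k x + (if x k then 1 else 0)"
proof -
  have "bin (Suc k) x = (\<Sum>j<k. (if x j then 2 ^ (k - j) else 0)) + (if x k then 1 else 0)"
    by (simp add: bin_def cong: if_cong)
  also have "(\<Sum>j<k. (if x j then 2 ^ (k - j) else 0::nat)) = (\<Sum>j<k. 2 * (if x j then 2 ^ (k - 1 - j) else 0))"
  proof (rule sum.cong)
    fix j assume "j \<in> {..<k}"
    hence "k - j = Suc (k - 1 - j)" by auto
    thus "(if x j then 2 ^ (k - j) else 0) = 2 * (if x j then 2 ^ (k - 1 - j) else (0::nat))" by simp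
  qed simp
  finally show ?thesis by (simp add: bin_def sum_distrib_left)
qed

lemma bin_lt: "bin k x < 2 ^ k"
proof (induction k)
  case (Suc k)
  thus ?case by (simp add: bin_Suc)
qed (simp add: bin_def)

lemma bin_cong: "(\<And>j. j < k \<Longrightarrow> x j = y j) \<Longrightarrow> bin k x = bin k y"
  unfolding bin_def by (intro sum.cong) auto

lemma bin_inj: "bin k x = bin k y \<Longrightarrow> j < k \<Longrightarrow> x j = y j"
proof (induction k arbitrary: j)
  case (Suc k)
  have e: "2 * bin k x + (if x k then 1 else 0) = 2 * bin k y + (if y k then 1 else 0)"
    using Suc.prems(1) unfolding bin_Suc .
  have xk: "x k = y k" using e by (cases "x k"; cases "y k") presburger+
  have "bin k x = bin k y" using e xk by simp
  thus ?case using Suc xk by (cases "j = k") auto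
qed simp

lemma card_pairs: "finite M \<Longrightarrow> (\<Sum>A\<in>Pow M. (2::nat) ^ card (M - A)) = 3 ^ card M"
proof (induction M rule: finite_induct)
  case (insert a F)
  have "(\<Sum>A\<in>Pow (insert a F). (2::nat) ^ card (insert a F - A)) =
     (\<Sum>A\<in>Pow F. 2 ^ card (insert a F - A)) + (\<Sum>A\<in>insert a ` Pow F. 2 ^ card (insert a F - A))"
    unfolding Pow_insert by (rule sum.union_disjoint) (use insert.hyps in auto)
  also have "(\<Sum>A\<in>Pow F. (2::nat) ^ card (insert a F - A)) = (\<Sum>A\<in>Pow F. 2 * 2 ^ card (F - A))"
  proof (rule sum.cong)
    fix A assume "A \<in> Pow F"
    hence "insert a F - A = insert a (F - A)" "a \<notin> F - A" using insert.hyps by auto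
    thus "(2::nat) ^ card (insert a F - A) = 2 * 2 ^ card (F - A)" using insert.hyps by simp
  qed simp
  also have "(\<Sum>A\<in>insert a ` Pow F. (2::nat) ^ card (insert a F - A)) = (\<Sum>A\<in>Pow F. 2 ^ card (insert a F - insert a A))"
    by (subst sum.reindex) (use insert.hyps in \<open>auto intro!: inj_onI simp: o_def\<close>)
  also have "\<dots> = (\<Sum>A\<in>Pow F. 2 ^ card (F - A))"
    by (intro sum.cong) (use insert.hyps in auto)
  finally show ?case using insert by (simp add: sum_distrib_left[symmetric])
qed simp


theorem claimA3:
  fixes n k :: nat
  assumes "n \<ge> 2" and "n = 2 ^ k"
  shows "real (spar (k + n) (ADDR k)) = real n powr log 2 3"
proof -
  define M where "M = {..<k}"
  define B where "B A = bin k (\<lambda>j. j \<in> A)" for A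
  define P where "P = Sigma (Pow M) (\<lambda>A. Pow (M - A))"
  define g where "g = (\<lambda>(A, U). A \<union> U \<union> {k + B A})"
  define w where "w = (\<lambda>(A::nat set, U::nat set). (-1::real) ^ card U)"
  define c where "c S = sum w {p\<in>P. g p = S}" for S
  have fM: "finite M" by (simp add: M_def)
  have fP: "finite P" unfolding P_def using fM by auto
  have Blt: "B A < n" for A using bin_lt assms(2) by (simp add: B_def)
  have gsub: "g p \<subseteq> {..<k+n}" if "p \<in> P" for p
    using that Blt by (auto simp: g_def P_def M_def split: prod.splits)
  have gM: "g (A, U) \<inter> M = A \<union> U" if "(A, U) \<in> P" for A U
    using that by (auto simp: g_def P_def M_def)
  have gk: "g (A, U) - M = {k + B A}" if "(A, U) \<in> P" for A U
    using that by (auto simp: g_def P_def M_def)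
  have ginj: "inj_on g P"
  proof (rule inj_onI)
    fix p q assume p: "p \<in> P" and q: "q \<in> P" and e: "g p = g q"
    obtain A U where pa: "p = (A, U)" by (cases p)
    obtain A' U' where qa: "q = (A', U')" by (cases q)
    have "{k + B A} = {k + B A'}" using gk[of A U] gk[of A' U'] p q e pa qa by metis
    hence "B A = B A'" by simp
    hence "\<forall>j<k. (j \<in> A) = (j \<in> A')" unfolding B_def using bin_inj by blast
    moreover have "A \<subseteq> M" "A' \<subseteq> M" "U \<subseteq> M - A" "U' \<subseteq> M - A'" using p q pa qa by (auto simp: P_def)
    ultimately have AA: "A = A'" by (auto simp: M_def)
    have "A \<union> U = A' \<union> U'" using gM[of A U] gM[of A' U'] p q e pa qa by metis
    hence "U = U'" using AA \<open>U \<subseteq> M - A\<close> \<open>U' \<subseteq> M - A'\<close> by blast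
    thus "p = q" using AA pa qa by simp
  qed
  have exp: "is_mobius_expansion (k + n) (ADDR k) c"
    unfolding is_mobius_expansion_def
  proof (intro conjI allI impI ballI)
    fix S assume "\<not> S \<subseteq> {..<k + n}"
    hence e: "{p\<in>P. g p = S} = {}" using gsub by blast
    show "c S = 0" unfolding c_def e by simp
  next
    fix x :: "nat \<Rightarrow> bool" assume x: "x \<in> inputs (k + n)"
    define ind where "ind i = (if x i then 1 else 0::real)" for i
    define Z where "Z = {j\<in>M. x j}"
    have ZM: "Z \<in> Pow M" by (auto simp: Z_def)
    have "(\<Sum>S\<in>Pow {..<k + n}. c S * (\<Prod>i\<in>S. (if x i then 1 else 0))) =
          (\<Sum>S\<in>Pow {..<k + n}. \<Sum>p\<in>{p\<in>P. g p = S}. w p * prod ind (g p))"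
      unfolding c_def ind_def by (intro sum.cong refl) (auto simp: sum_distrib_right)
    also have "\<dots> = (\<Sum>p\<in>P. w p * prod ind (g p))"
      by (rule sum.group) (use fP gsub in auto)
    also have "\<dots> = (\<Sum>A\<in>Pow M. \<Sum>U\<in>Pow (M - A). w (A, U) * prod ind (g (A, U)))"
      unfolding P_def using fM by (subst sum.Sigma) auto
    also have "\<dots> = (\<Sum>A\<in>Pow M. ind (k + B A) * prod ind A *
                       (\<Sum>U\<in>Pow (M - A). (-1) ^ card U * prod ind U))"
    proof (rule sum.cong[OF refl])
      fix A assume A: "A \<in> Pow M"
      show "(\<Sum>U\<in>Pow (M - A). w (A, U) * prod ind (g (A, U))) =
        ind (k + B A) * prod ind A * (\<Sum>U\<in>Pow (M - A). (-1) ^ card U * prod ind U)"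
        unfolding sum_distrib_left
      proof (rule sum.cong[OF refl])
        fix U assume U: "U \<in> Pow (M - A)"
        have fA: "finite A" "finite U" using A U fM by (auto intro: finite_subset)
        have "k + B A \<notin> A \<union> U" using A U by (auto simp: M_def)
        hence "prod ind (g (A, U)) = ind (k + B A) * prod ind (A \<union> U)"
          using fA by (simp add: g_def prod.insert)
        also have "prod ind (A \<union> U) = prod ind A * prod ind U"
          using fA U by (intro prod.union_disjoint) auto
        finally show "w (A, U) * prod ind (g (A, U)) =
             ind (k + B A) * prod ind A * ((-1) ^ card U * prod ind U)"
          by (simp add: w_def)
      qed
    qed
    also have "\<dots> = (\<Sum>A\<in>Pow M. ind (k + B A) * (prod ind A * (\<Prod>i\<in>M - A. 1 - ind i)))"
    proof (rule sum.cong[OF refl])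
      fix A assume A: "A \<in> Pow M"
      have "(\<Prod>i\<in>M - A. 1 - ind i) = (\<Sum>U\<in>Pow (M - A). (-1) ^ card U * prod ind U * (\<Prod>i\<in>M - A - U. 1))"
        using fM by (intro prod_diff_conv_sum) auto
      thus "ind (k + B A) * prod ind A * (\<Sum>U\<in>Pow (M - A). (-1) ^ card U * prod ind U) =
            ind (k + B A) * (prod ind A * (\<Prod>i\<in>M - A. 1 - ind i))" by simp
    qed
    also have "\<dots> = (\<Sum>A\<in>Pow M. if A = Z then ind (k + B Z) else 0)"
    proof (rule sum.cong[OF refl])
      fix A assume A: "A \<in> Pow M"
      have fA: "finite A" "finite (M - A)" using A fM finite_subset by auto
      show "ind (k + B A) * (prod ind A * (\<Prod>i\<in>M - A. 1 - ind i)) = (if A = Z then ind (k + B Z) else 0)"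
      proof (cases "A = Z")
        case True
        hence "prod ind A = 1" "(\<Prod>i\<in>M - A. 1 - ind i) = 1"
          by (auto simp: Z_def ind_def intro!: prod.neutral)
        thus ?thesis using True by simp
      next
        case False
        hence "(\<exists>j\<in>A. \<not> x j) \<or> (\<exists>j\<in>M - A. x j)" using A by (auto simp: Z_def)
        hence "prod ind A = 0 \<or> (\<Prod>i\<in>M - A. 1 - ind i) = 0"
          using fA by (auto simp: ind_def prod_zero_iff)
        thus ?thesis using False by auto
      qed
    qed
    also have "\<dots> = ind (k + B Z)" using ZM fM by (simp add: sum.delta)
    also have "\<dots> = ADDR k x"
    proof -
      have "bin k x = B Z" unfolding B_def by (rule bin_cong) (auto simp: Z_def M_def)
      thus ?thesis by (simp add: ADDR_def ind_def)
    qed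
    finally show "ADDR k x = (\<Sum>S\<in>Pow {..<k + n}. c S * (\<Prod>i\<in>S. (if x i then 1 else 0)))" by simp
  qed
  have "{S. S \<subseteq> {..<k + n} \<and> mobius_coeff (k + n) (ADDR k) S \<noteq> 0} = g ` P"
  proof -
    have cimg: "c (g p) = w p" if "p \<in> P" for p
    proof -
      have "{q\<in>P. g q = g p} = {p}" using ginj that by (auto dest: inj_onD)
      thus ?thesis by (simp add: c_def)
    qed
    have wnz: "w p \<noteq> 0" for p by (auto simp: w_def split: prod.splits)
    have cz: "c S = 0" if "S \<notin> g ` P" for S
    proof -
      have e: "{q\<in>P. g q = S} = {}" using that by auto
      show ?thesis unfolding c_def e by simp
    qed
    show ?thesis using mobius_coeff_eq[OF exp] cimg wnz cz gsub by fastforce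
  qed
  hence "spar (k + n) (ADDR k) = card P"
    unfolding spar_def using card_image[OF ginj] by simp
  also have "card P = 3 ^ k"
  proof -
    have "card P = (\<Sum>A\<in>Pow M. card (Pow (M - A)))"
      unfolding P_def using fM by (subst card_SigmaI) auto
    also have "\<dots> = (\<Sum>A\<in>Pow M. 2 ^ card (M - A))"
      using fM by (intro sum.cong refl) (simp add: card_Pow)
    also have "\<dots> = 3 ^ k" using card_pairs[OF fM] by (simp add: M_def)
    finally show ?thesis .
  qed
  finally have sp: "real (spar (k + n) (ADDR k)) = 3 ^ k" by simp
  have "real n powr log 2 3 = (2 powr real k) powr log 2 3"
    using assms(2) by (simp add: powr_realpow)
  also have "\<dots> = (2 powr log 2 3) powr real k"
    by (metis powr_powr mult.commute)
  also have "\<dots> = (2 powr log 2 3) ^ k"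
    by (simp add: powr_realpow)
  also have "\<dots> = 3 ^ k" by simp
  finally show ?thesis using sp by simp
qed

end
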